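(* Let $P\in\mathbb{R}^{p\times\tilde p}$ be a fixed matrix. For $\lambda>0$, consider the projected attributor $$\tau_{\lambda,P}(z',z):=-\nabla_\theta f(z',\theta_S^* )^\top P(P^\top F_SP+\lambda I_{\tilde p})^{-1}P^\top\nabla_\theta L(z,\theta_S^* ).$$ Let $c_p^P(\lambda;z')$ be the Pearson correlation, under $A\sim D_a$, between $f(z',\theta_A^* )$ and $\sum_{z\in A}\tau_{\lambda,P}(z',z)$. Write $u:=P^\top\nabla_\theta f(z',\theta_S^* )$ and $\hat F:=P^\top F_SP$, and define - $t^P_{k,z',\lambda}:=u^\top(\hat F+\lambda I_{\tilde p})^{-k}\hat F u$; - $r^P_{z',\lambda}:=-u^\top(\hat F+\lambda I_{\tilde p})^{-1}P^\top g_{z'}$; - $o^P_{z',\lambda}:=\alpha_{z'}^\top(JPP^\top J^\top+n\lambda I_n)^{-1}\alpha_{z'}$. Assume $\hat Fu\neq0$, $\mathrm{Var}_{A\sim D_a}[f(z',\theta_A^* )]>0$, and $\alpha_{z'}\neq0$. If $$\frac{r^P_{z',\lambda}}{\sqrt{o^P_{z',\lambda}t^P_{1,z',\lambda}}}>\frac{t^P_{2,z',\lambda}}{\sqrt{t^P_{3,z',\lambda}t^P_{1,z',\lambda}}},$$ then $\partial c_p^P(\lambda;z')/\partial\lambda>0$.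
   Context: Let $n\ge2$ and let $S=\{z_1,\dots,z_n\}$ be a training set. Let $L(z,\theta)>0$ be a loss differentiable in $\theta\in\mathbb{R}^p$. Set $p(z,\theta)=e^{-L(z,\theta)}$ and $f(z,\theta)=\ln\frac{p(z,\theta)}{1-p(z,\theta)}$. Let $\theta_S^*$ satisfy $\sum_i\nabla_\theta L(z_i,\theta_S^* )=0$. For each subset $A\subseteq S$, let $\theta_A^*$ be a fixed parameter vector. Fix $1\le a<n$, and let $D_a$ be the uniform distribution over the size-$a$ subsets of $S$. Let $J\in\mathbb{R}^{n\times p}$ have $i$-th row $\nabla_\theta L(z_i,\theta_S^* )^\top$, and let $F_S:=\frac1nJ^\top J$. Define $\alpha_{z',i}:=\mathbb{E}_{A\sim D_a}[f(z',\theta_A^* )\mid z_i\in A]-\mathbb{E}_{A\sim D_a}[f(z',\theta_A^* )]$ and $g_{z'}:=\frac1nJ^\top\alpha_{z'}$. *)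

theory Defs
  imports "HOL-Analysis.Analysis"
begin

definition grad :: "('a::real_inner \<Rightarrow> real) \<Rightarrow> 'a \<Rightarrow> 'a" where
  "grad g x = (THE D. (g has_derivative (\<lambda>h. h \<bullet> D)) (at x))"

definition probL :: "('z \<Rightarrow> 'p \<Rightarrow> real) \<Rightarrow> 'z \<Rightarrow> 'p \<Rightarrow> real" where
  "probL L z th = exp (- L z th)"

definition logitf :: "('z \<Rightarrow> 'p \<Rightarrow> real) \<Rightarrow> 'z \<Rightarrow> 'p \<Rightarrow> real" where
  "logitf L z th = ln (probL L z th / (1 - probL L z th))"

(* support of D_a: the size-a subsets of S *)
definition subsets_of_size :: "nat \<Rightarrow> 'a set \<Rightarrow> 'a set set" where
  "subsets_of_size a S = {A. A \<subseteq> S \<and> card A = a}"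

definition unif_exp :: "'b set \<Rightarrow> ('b \<Rightarrow> real) \<Rightarrow> real" where
  "unif_exp X g = (\<Sum>x\<in>X. g x) / real (card X)"

definition unif_var :: "'b set \<Rightarrow> ('b \<Rightarrow> real) \<Rightarrow> real" where
  "unif_var X g = unif_exp X (\<lambda>x. (g x - unif_exp X g)\<^sup>2)"

definition unif_cov :: "'b set \<Rightarrow> ('b \<Rightarrow> real) \<Rightarrow> ('b \<Rightarrow> real) \<Rightarrow> real" where
  "unif_cov X g h = unif_exp X (\<lambda>x. (g x - unif_exp X g) * (h x - unif_exp X h))"

definition pearson :: "'b set \<Rightarrow> ('b \<Rightarrow> real) \<Rightarrow> ('b \<Rightarrow> real) \<Rightarrow> real" where
  "pearson X g h = unif_cov X g h / sqrt (unif_var X g * unif_var X h)"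

definition matpow :: "real^'q^'q \<Rightarrow> nat \<Rightarrow> real^'q^'q" where
  "matpow M k = ((\<lambda>N. M ** N) ^^ k) (mat 1)"

end

theory Submission
  imports Defs
begin

lemma count_sub:
  assumes S: "finite S" and T: "T \<subseteq> S"
  shows "card {A. A \<subseteq> S \<and> card A = a \<and> T \<subseteq> A} =
    (if card T \<le> a then (card S - card T) choose (a - card T) else 0)"
proof (cases "card T \<le> a")
  case False
  have fT: "finite T" using S T finite_subset by blast
  have "{A. A \<subseteq> S \<and> card A = a \<and> T \<subseteq> A} = {}"
  proof (rule ccontr)
    assume "{A. A \<subseteq> S \<and> card A = a \<and> T \<subseteq> A} \<noteq> {}"
    then obtain A where "A \<subseteq> S" "card A = a" "T \<subseteq> A" by blast
    then have "card T \<le> a" using card_mono[of A T] finite_subset[OF _ S] by blast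
    then show False using False by simp
  qed
  then show ?thesis using False by (metis card.empty)
next
  case True
  have fT: "finite T" using S T finite_subset by blast
  have bij: "bij_betw (\<lambda>A. A - T) {A. A \<subseteq> S \<and> card A = a \<and> T \<subseteq> A}
      {B. B \<subseteq> S - T \<and> card B = a - card T}"
  proof (rule bij_betw_byWitness[where f'="\<lambda>B. B \<union> T"])
    show "\<forall>A\<in>{A. A \<subseteq> S \<and> card A = a \<and> T \<subseteq> A}. A - T \<union> T = A" by auto
    show "\<forall>B\<in>{B. B \<subseteq> S - T \<and> card B = a - card T}. B \<union> T - T = B" by auto
    show "(\<lambda>A. A - T) ` {A. A \<subseteq> S \<and> card A = a \<and> T \<subseteq> A} \<subseteq> {B. B \<subseteq> S - T \<and> card B = a - card T}"
    proof
      fix B assume "B \<in> (\<lambda>A. A - T) ` {A. A \<subseteq> S \<and> card A = a \<and> T \<subseteq> A}"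
      then obtain A where A: "A \<subseteq> S" "card A = a" "T \<subseteq> A" and B: "B = A - T" by blast
      have "card (A - T) = card A - card T" using card_Diff_subset[OF fT A(3)] .
      then show "B \<in> {B. B \<subseteq> S - T \<and> card B = a - card T}" using A B by auto
    qed
    show "(\<lambda>B. B \<union> T) ` {B. B \<subseteq> S - T \<and> card B = a - card T} \<subseteq> {A. A \<subseteq> S \<and> card A = a \<and> T \<subseteq> A}"
    proof
      fix A assume "A \<in> (\<lambda>B. B \<union> T) ` {B. B \<subseteq> S - T \<and> card B = a - card T}"
      then obtain B where B: "B \<subseteq> S - T" "card B = a - card T" and A: "A = B \<union> T" by blast
      have fB: "finite B" using B(1) S finite_subset by blast
      have "card (B \<union> T) = card B + card T" using card_Un_disjoint[OF fB fT] B(1) by blast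
      then show "A \<in> {A. A \<subseteq> S \<and> card A = a \<and> T \<subseteq> A}" using A B T True by auto
    qed
  qed
  have "card {A. A \<subseteq> S \<and> card A = a \<and> T \<subseteq> A} = card {B. B \<subseteq> S - T \<and> card B = a - card T}"
    using bij_betw_same_card[OF bij] .
  also have "\<dots> = card (S - T) choose (a - card T)" using n_subsets[of "S - T"] S by simp
  also have "card (S - T) = card S - card T" using card_Diff_subset[OF fT T] .
  finally show ?thesis using True by simp
qed

lemma sum_over_subset_range:
  fixes z :: "'n::finite \<Rightarrow> 'z" and w :: "'z \<Rightarrow> real"
  assumes inj: "inj z" and A: "A \<subseteq> range z"
  shows "(\<Sum>zz\<in>A. w zz) = (\<Sum>i\<in>UNIV. (if z i \<in> A then w (z i) else 0))"
proof -
  have "A = z ` {i. z i \<in> A}" using A by auto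
  then have "(\<Sum>zz\<in>A. w zz) = (\<Sum>i\<in>{i. z i \<in> A}. w (z i))"
    using sum.reindex[of z "{i. z i \<in> A}" w] inj_on_subset[OF inj] by (metis subset_UNIV comp_apply sum.cong)
  also have "\<dots> = (\<Sum>i\<in>UNIV. (if z i \<in> A then w (z i) else 0))"
    using sum.inter_filter[of UNIV "\<lambda>i. w (z i)" "\<lambda>i. z i \<in> A"] by simp
  finally show ?thesis .
qed

lemma moments:
  fixes z :: "'n::finite \<Rightarrow> 'z" and w :: "'z \<Rightarrow> real" and F :: "'z set \<Rightarrow> real"
  assumes inj: "inj z" and a1: "1 \<le> a" and an: "a < CARD('n)"
    and sum0: "(\<Sum>i\<in>UNIV. w (z i)) = 0"
  defines "DA \<equiv> subsets_of_size a (range z)"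
  defines "pp \<equiv> real ((CARD('n) - 1) choose (a - 1)) / real (CARD('n) choose a)"
    and "qq \<equiv> (if 2 \<le> a then real ((CARD('n) - 2) choose (a - 2)) else 0) / real (CARD('n) choose a)"
  shows "unif_cov DA F (\<lambda>A. \<Sum>zz\<in>A. w zz) =
           pp * (\<Sum>i\<in>UNIV. w (z i) * (unif_exp {A\<in>DA. z i \<in> A} F - unif_exp DA F))"
    and "unif_var DA (\<lambda>A. \<Sum>zz\<in>A. w zz) = (pp - qq) * (\<Sum>i\<in>UNIV. (w (z i))\<^sup>2)"
    and "qq < pp" "0 \<le> qq"
proof -
  define n where "n = CARD('n)"
  define S where "S = range z"
  have fS: "finite S" unfolding S_def by simp
  have cS: "card S = n" unfolding S_def n_def using card_image[OF inj] by simp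
  have DA': "DA = {A. A \<subseteq> S \<and> card A = a}" unfolding DA_def subsets_of_size_def S_def by simp
  have fDA: "finite DA" unfolding DA' using fS by (simp add: finite_subset[of _ "Pow S"])
  have N0: "card DA = n choose a" unfolding DA' using n_subsets[OF fS] cS by simp
  have N0pos: "0 < n choose a" using an n_def by simp
  let ?N = "real (n choose a)"
  have Npos: "?N > 0" using N0pos by simp
  define c1 where "c1 = (n - 1) choose (a - 1)"
  define c2 where "c2 = (if 2 \<le> a then (n - 2) choose (a - 2) else 0)"
  have cnt1: "card {A\<in>DA. z i \<in> A} = c1" for i
  proof -
    have "{A\<in>DA. z i \<in> A} = {A. A \<subseteq> S \<and> card A = a \<and> {z i} \<subseteq> A}" unfolding DA' by auto
    then show ?thesis using count_sub[OF fS, of "{z i}" a] a1 cS unfolding c1_def S_def by simp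
  qed
  have cnt2: "card {A\<in>DA. z i \<in> A \<and> z j \<in> A} = c2" if "i \<noteq> j" for i j
  proof -
    have zz: "z i \<noteq> z j" using inj that by (meson injD)
    have "{A\<in>DA. z i \<in> A \<and> z j \<in> A} = {A. A \<subseteq> S \<and> card A = a \<and> {z i, z j} \<subseteq> A}" unfolding DA' by auto
    moreover have "card {z i, z j} = 2" using zz by simp
    moreover have "{z i, z j} \<subseteq> S" unfolding S_def by auto
    ultimately show ?thesis using count_sub[OF fS, of "{z i, z j}" a] cS unfolding c2_def by simp
  qed
  have pp': "pp = real c1 / ?N" unfolding pp_def c1_def n_def by simp
  have qq': "qq = real c2 / ?N" unfolding qq_def c2_def n_def by simp
  have c12: "c2 < c1"
  proof (cases "2 \<le> a")
    case True
    have "n - 1 = Suc (n - 2)" "a - 1 = Suc (a - 2)" using True an n_def by auto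
    then have "c1 = ((n - 2) choose (a - 2)) + ((n - 2) choose (a - 1))" unfolding c1_def
      by (metis Suc_diff_Suc True binomial_Suc_Suc less_le_trans numeral_2_eq_2 order_refl Suc_le_lessD)
    moreover have "0 < (n - 2) choose (a - 1)" using an True n_def by simp
    ultimately show ?thesis unfolding c2_def using True by simp
  next
    case False
    then show ?thesis unfolding c1_def c2_def using a1 an n_def by simp
  qed
  show "qq < pp" unfolding pp' qq' using c12 Npos by (simp add: divide_strict_right_mono)
  show "0 \<le> qq" unfolding qq' by simp
  define ind where "ind i A = (if z i \<in> A then 1 else 0 :: real)" for i A
  define h where "h = (\<lambda>A. \<Sum>zz\<in>A. w zz)"
  have hA: "h A = (\<Sum>i\<in>UNIV. w (z i) * ind i A)" if "A \<in> DA" for A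
  proof -
    have "A \<subseteq> range z" using that unfolding DA' S_def by simp
    then show ?thesis unfolding h_def ind_def using sum_over_subset_range[OF inj, of A w]
      by (simp add: if_distrib cong: if_cong)
  qed
  have sind: "(\<Sum>A\<in>DA. ind i A * G A) = (\<Sum>A\<in>{A\<in>DA. z i \<in> A}. G A)" for i G
  proof -
    have "\<And>A. ind i A * G A = (if z i \<in> A then G A else 0)" unfolding ind_def by simp
    then show ?thesis using sum.inter_filter[OF fDA, of G "\<lambda>A. z i \<in> A"] by simp
  qed
  have sind2: "(\<Sum>A\<in>DA. ind i A * ind j A) = (if i = j then real c1 else real c2)" for i j
  proof -
    have "(\<Sum>A\<in>DA. ind i A * ind j A) = real (card {A\<in>DA. z i \<in> A \<and> z j \<in> A})"
    proof -
      have "\<And>A. ind i A * ind j A = (if z i \<in> A \<and> z j \<in> A then 1 else 0)" unfolding ind_def by simp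
      then show ?thesis using sum.inter_filter[OF fDA, of "\<lambda>_. (1::real)" "\<lambda>A. z i \<in> A \<and> z j \<in> A"]
        by simp
    qed
    then show ?thesis using cnt1 cnt2 by auto
  qed
  have ue: "unif_exp DA G = (\<Sum>A\<in>DA. G A) / ?N" for G unfolding unif_exp_def N0 by simp
  have Eh: "unif_exp DA h = 0"
  proof -
    have "(\<Sum>A\<in>DA. h A) = (\<Sum>A\<in>DA. \<Sum>i\<in>UNIV. w (z i) * ind i A)" using hA by simp
    also have "\<dots> = (\<Sum>i\<in>UNIV. w (z i) * (\<Sum>A\<in>DA. ind i A * 1))"
      by (subst sum.swap) (simp add: sum_distrib_left)
    also have "\<dots> = (\<Sum>i\<in>UNIV. w (z i) * real c1)" using sind[of _ "\<lambda>_. 1"] cnt1 by simp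
    also have "\<dots> = 0" using sum0 by (simp add: sum_distrib_right[symmetric])
    finally show ?thesis unfolding unif_exp_def by simp
  qed
  show "unif_cov DA F (\<lambda>A. \<Sum>zz\<in>A. w zz) =
           pp * (\<Sum>i\<in>UNIV. w (z i) * (unif_exp {A\<in>DA. z i \<in> A} F - unif_exp DA F))"
  proof -
    let ?EF = "unif_exp DA F"
    have "(\<Sum>A\<in>DA. (F A - ?EF) * (h A - unif_exp DA h)) = (\<Sum>A\<in>DA. \<Sum>i\<in>UNIV. w (z i) * (ind i A * (F A - ?EF)))"
      using hA Eh by (simp add: sum_distrib_left mult_ac)
    also have "\<dots> = (\<Sum>i\<in>UNIV. w (z i) * (\<Sum>A\<in>DA. ind i A * (F A - ?EF)))"
      by (subst sum.swap) (simp add: sum_distrib_left)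
    also have "\<dots> = (\<Sum>i\<in>UNIV. w (z i) * (real c1 * (unif_exp {A\<in>DA. z i \<in> A} F - ?EF)))"
    proof (rule sum.cong[OF refl])
      fix i
      have c1pos: "real c1 > 0" using c12 by simp
      have "(\<Sum>A\<in>DA. ind i A * (F A - ?EF)) = (\<Sum>A\<in>{A\<in>DA. z i \<in> A}. F A) - real c1 * ?EF"
        using sind[of i "\<lambda>A. F A - ?EF"] cnt1[of i] by (simp add: sum_subtractf)
      also have "\<dots> = real c1 * (unif_exp {A\<in>DA. z i \<in> A} F - ?EF)"
        unfolding unif_exp_def using cnt1[of i] c1pos by (simp add: field_simps)
      finally show "w (z i) * (\<Sum>A\<in>DA. ind i A * (F A - ?EF)) = w (z i) * (real c1 * (unif_exp {A\<in>DA. z i \<in> A} F - ?EF))"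
        by simp
    qed
    finally have "(\<Sum>A\<in>DA. (F A - ?EF) * (h A - unif_exp DA h)) =
        real c1 * (\<Sum>i\<in>UNIV. w (z i) * (unif_exp {A\<in>DA. z i \<in> A} F - ?EF))"
      by (simp add: sum_distrib_left mult_ac)
    moreover have "unif_cov DA F h = (\<Sum>A\<in>DA. (F A - ?EF) * (h A - unif_exp DA h)) / ?N"
      unfolding unif_cov_def by (rule ue)
    ultimately show ?thesis unfolding h_def[symmetric] pp' by simp
  qed
  show "unif_var DA (\<lambda>A. \<Sum>zz\<in>A. w zz) = (pp - qq) * (\<Sum>i\<in>UNIV. (w (z i))\<^sup>2)"
  proof -
    have "(\<Sum>A\<in>DA. (h A - unif_exp DA h)\<^sup>2) = (\<Sum>A\<in>DA. \<Sum>i\<in>UNIV. \<Sum>j\<in>UNIV. w (z i) * w (z j) * (ind i A * ind j A))"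
      using hA Eh by (simp add: power2_eq_square sum_product mult_ac)
    also have "\<dots> = (\<Sum>i\<in>UNIV. \<Sum>j\<in>UNIV. w (z i) * w (z j) * (\<Sum>A\<in>DA. ind i A * ind j A))"
      by (subst sum.swap) (simp add: sum_distrib_left sum.swap[of _ DA])
    also have "\<dots> = (\<Sum>i\<in>UNIV. \<Sum>j\<in>UNIV. w (z i) * w (z j) * (real c2 + (if i = j then real c1 - real c2 else 0)))"
      using sind2 by (intro sum.cong) auto
    also have "\<dots> = (\<Sum>i\<in>UNIV. w (z i) * (real c2 * (\<Sum>j\<in>UNIV. w (z j))) + w (z i) * w (z i) * (real c1 - real c2))"
    proof (rule sum.cong[OF refl])
      fix i :: 'n
      have "(\<Sum>j\<in>UNIV. w (z i) * w (z j) * (real c2 + (if i = j then real c1 - real c2 else 0)))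
          = (\<Sum>j\<in>UNIV. w (z i) * (real c2 * w (z j)) + (if i = j then w (z i) * w (z i) * (real c1 - real c2) else 0))"
        by (intro sum.cong) (auto simp: algebra_simps)
      also have "\<dots> = w (z i) * (real c2 * (\<Sum>j\<in>UNIV. w (z j))) + w (z i) * w (z i) * (real c1 - real c2)"
        by (simp add: sum.distrib sum_distrib_left)
      finally show "(\<Sum>j\<in>UNIV. w (z i) * w (z j) * (real c2 + (if i = j then real c1 - real c2 else 0)))
          = w (z i) * (real c2 * (\<Sum>j\<in>UNIV. w (z j))) + w (z i) * w (z i) * (real c1 - real c2)" .
    qed
    also have "\<dots> = (real c1 - real c2) * (\<Sum>i\<in>UNIV. (w (z i))\<^sup>2)"
      using sum0 by (simp add: sum_distrib_left power2_eq_square mult_ac)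
    moreover have "unif_var DA h = (\<Sum>A\<in>DA. (h A - unif_exp DA h)\<^sup>2) / ?N"
      unfolding unif_var_def by (rule ue)
    ultimately show ?thesis unfolding h_def[symmetric] pp' qq' by (simp add: diff_divide_distrib[symmetric])
  qed
qed

lemma adj: "x \<bullet> (A *v y) = (transpose A *v x) \<bullet> (y::real^'a)"
  by (simp add: dot_lmul_matrix transpose_matrix_vector)

lemma adj2: "(A *v x) \<bullet> y = x \<bullet> (transpose A *v (y::real^'a))"
  by (metis adj inner_commute)

lemma pd_inverse:
  fixes M :: "real^'k^'k"
  assumes c: "c > 0" and pd: "\<And>x. c * (x \<bullet> x) \<le> x \<bullet> (M *v x)"
  shows "M *v (matrix_inv M *v y) = y" "matrix_inv M *v (M *v y) = y"
    "norm (matrix_inv M *v y) \<le> norm y / c"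
proof -
  have inj: "inj ((*v) M)"
  proof (rule injI)
    fix x x' assume "M *v x = M *v x'"
    then have "M *v (x - x') = 0" by (simp add: matrix_vector_mult_diff_distrib)
    then have "c * ((x - x') \<bullet> (x - x')) \<le> 0" using pd[of "x - x'"] by simp
    then have "(x - x') \<bullet> (x - x') \<le> 0" using c by (simp add: mult_le_0_iff)
    then show "x = x'" by (metis inner_gt_zero_iff not_le right_minus_eq)
  qed
  then have "invertible M" using matrix_left_invertible_injective invertible_left_inverse by blast
  then have "M ** matrix_inv M = mat 1 \<and> matrix_inv M ** M = mat 1"
    unfolding invertible_def matrix_inv_def by (rule someI_ex)
  then show 1: "M *v (matrix_inv M *v y) = y" "matrix_inv M *v (M *v y) = y"
    by (simp_all add: matrix_vector_mul_assoc)
  define x where "x = matrix_inv M *v y"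
  have "c * (norm x)\<^sup>2 \<le> x \<bullet> y" using pd[of x] 1(1) unfolding x_def by (simp add: power2_norm_eq_inner)
  also have "\<dots> \<le> norm x * norm y" by (rule norm_cauchy_schwarz)
  finally have "c * (norm x)\<^sup>2 \<le> norm x * norm y" .
  then have "c * norm x \<le> norm y"
    by (cases "norm x = 0") (auto simp: power2_eq_square mult_le_cancel_right)
  then show "norm (matrix_inv M *v y) \<le> norm y / c" unfolding x_def using c by (simp add: field_simps)
qed

lemma shift_pd:
  fixes F :: "real^'k^'k"
  assumes psd: "\<And>x. 0 \<le> x \<bullet> (F *v x)"
  shows "\<mu> * (x \<bullet> x) \<le> x \<bullet> ((F + \<mu> *\<^sub>R mat 1) *v x)"
  using psd[of x] by (simp add: matrix_vector_mult_add_rdistrib scaleR_matrix_vector_assoc[symmetric] inner_add_right)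

lemma resolvent_identity:
  fixes F :: "real^'k^'k"
  assumes psd: "\<And>x. 0 \<le> x \<bullet> (F *v x)" and mu: "\<mu> > 0" and lam: "lam > 0"
  shows "matrix_inv (F + \<mu> *\<^sub>R mat 1) *v y - matrix_inv (F + lam *\<^sub>R mat 1) *v y
     = (lam - \<mu>) *\<^sub>R (matrix_inv (F + \<mu> *\<^sub>R mat 1) *v (matrix_inv (F + lam *\<^sub>R mat 1) *v y))"
proof -
  let ?M = "\<lambda>t. F + t *\<^sub>R mat 1"
  let ?R = "\<lambda>t. matrix_inv (?M t)"
  note pm = pd_inverse[OF mu shift_pd[OF psd]]
  note pl = pd_inverse[OF lam shift_pd[OF psd]]
  have Mx: "?M \<mu> *v x = ?M lam *v x + (\<mu> - lam) *\<^sub>R x" for x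
    by (simp add: matrix_vector_mult_add_rdistrib scaleR_matrix_vector_assoc[symmetric] algebra_simps)
  have "?M \<mu> *v (?R \<mu> *v y - ?R lam *v y) = y - (y + (\<mu> - lam) *\<^sub>R (?R lam *v y))"
    using pm(1) pl(1) Mx by (simp add: matrix_vector_mult_diff_distrib)
  also have "\<dots> = ?M \<mu> *v ((lam - \<mu>) *\<^sub>R (?R \<mu> *v (?R lam *v y)))"
    using pm(1) by (simp add: matrix_vector_mult_scaleR algebra_simps)
  finally have "?R \<mu> *v (?M \<mu> *v (?R \<mu> *v y - ?R lam *v y)) = ?R \<mu> *v (?M \<mu> *v ((lam - \<mu>) *\<^sub>R (?R \<mu> *v (?R lam *v y))))"
    by simp
  then show ?thesis using pm(2) by simp
qed

lemma resolvent_deriv: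
  fixes F :: "real^'k^'k"
  assumes psd: "\<And>x. 0 \<le> x \<bullet> (F *v x)" and lam: "lam > 0"
  shows "((\<lambda>\<mu>. matrix_inv (F + \<mu> *\<^sub>R mat 1) *v y) has_vector_derivative
          - (matrix_inv (F + lam *\<^sub>R mat 1) *v (matrix_inv (F + lam *\<^sub>R mat 1) *v y))) (at lam)"
proof -
  let ?R = "\<lambda>t. matrix_inv (F + t *\<^sub>R mat 1)"
  define z where "z = ?R lam *v y"
  define K where "K = 2 * norm (?R lam *v z) / lam"
  have ev: "\<forall>\<^sub>F \<mu> in at lam. norm (norm (?R \<mu> *v y - ?R lam *v y - (\<mu> - lam) *\<^sub>R (- (?R lam *v z))) / norm (\<mu> - lam))
      \<le> norm (\<mu> - lam) * K"
  proof -
    have "\<forall>\<^sub>F \<mu> in at lam. \<mu> \<in> {lam/2<..}"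
      using lam by (intro eventually_at_in_open') auto
    then show ?thesis
    proof (rule eventually_mono)
      fix \<mu> assume "\<mu> \<in> {lam/2<..}"
      then have mu: "\<mu> > lam / 2" by simp
      then have mu0: "\<mu> > 0" using lam by simp
      have e1: "?R \<mu> *v y - ?R lam *v y = (lam - \<mu>) *\<^sub>R (?R \<mu> *v z)"
        unfolding z_def by (rule resolvent_identity[OF psd mu0 lam])
      have e2: "?R \<mu> *v z - ?R lam *v z = (lam - \<mu>) *\<^sub>R (?R \<mu> *v (?R lam *v z))"
        by (rule resolvent_identity[OF psd mu0 lam])
      have "?R \<mu> *v y - ?R lam *v y - (\<mu> - lam) *\<^sub>R (- (?R lam *v z))
          = (lam - \<mu>) *\<^sub>R (?R \<mu> *v z - ?R lam *v z)"
        using e1 by (simp add: algebra_simps)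
      also have "\<dots> = ((lam - \<mu>) * (lam - \<mu>)) *\<^sub>R (?R \<mu> *v (?R lam *v z))" using e2 by simp
      finally have eq: "norm (?R \<mu> *v y - ?R lam *v y - (\<mu> - lam) *\<^sub>R (- (?R lam *v z)))
         = \<bar>\<mu> - lam\<bar> * \<bar>\<mu> - lam\<bar> * norm (?R \<mu> *v (?R lam *v z))"
        by (simp add: abs_mult abs_minus_commute)
      have b: "norm (?R \<mu> *v (?R lam *v z)) \<le> norm (?R lam *v z) / \<mu>"
        by (rule pd_inverse(3)[OF mu0 shift_pd[OF psd]])
      also have "\<dots> \<le> K"
      proof -
        have "lam * norm (?R lam *v z) \<le> (2 * \<mu>) * norm (?R lam *v z)"
          by (rule mult_right_mono) (use mu in auto)
        then show ?thesis unfolding K_def using mu0 lam by (simp add: field_simps)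
      qed
      finally have b2: "norm (?R \<mu> *v (?R lam *v z)) \<le> K" .
      show "norm (norm (?R \<mu> *v y - ?R lam *v y - (\<mu> - lam) *\<^sub>R (- (?R lam *v z))) / norm (\<mu> - lam))
      \<le> norm (\<mu> - lam) * K"
      proof (cases "\<mu> = lam")
        case True then show ?thesis using b2 by simp
      next
        case False
        then have "\<bar>\<mu> - lam\<bar> > 0" by simp
        have gen: "\<And>a N. (a::real) \<noteq> 0 \<Longrightarrow> a * a * N / a = a * N" by simp
        have "norm (?R \<mu> *v y - ?R lam *v y - (\<mu> - lam) *\<^sub>R (- (?R lam *v z))) / norm (\<mu> - lam)
           = \<bar>\<mu> - lam\<bar> * norm (?R \<mu> *v (?R lam *v z))"
          unfolding eq real_norm_def using gen \<open>\<bar>\<mu> - lam\<bar> > 0\<close> by (metis less_irrefl)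
        also have "\<dots> \<le> \<bar>\<mu> - lam\<bar> * K" using b2 by (simp add: mult_left_mono)
        finally show ?thesis by simp
      qed
    qed
  qed
  have lim: "((\<lambda>\<mu>. \<mu> - lam) \<longlongrightarrow> 0) (at lam)"
    by (intro tendsto_eq_intros) auto
  have "((\<lambda>\<mu>. norm (?R \<mu> *v y - ?R lam *v y - (\<mu> - lam) *\<^sub>R (- (?R lam *v z))) / norm (\<mu> - lam)) \<longlongrightarrow> 0) (at lam)"
    by (rule tendsto_0_le[OF lim ev])
  then show ?thesis unfolding has_vector_derivative_def has_derivative_iff_norm z_def
    using bounded_linear_minus[OF bounded_linear_scaleR_left] by simp
qed

lemma sym_inv:
  fixes M :: "real^'k^'k"
  assumes c: "c > 0" and pd: "\<And>x. c * (x \<bullet> x) \<le> x \<bullet> (M *v x)"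
    and sym: "\<And>x y. x \<bullet> (M *v y) = (M *v x) \<bullet> y"
  shows "x \<bullet> (matrix_inv M *v y) = (matrix_inv M *v x) \<bullet> y"
proof -
  note p = pd_inverse[OF c pd]
  have "x \<bullet> (matrix_inv M *v y) = (M *v (matrix_inv M *v x)) \<bullet> (matrix_inv M *v y)" using p(1) by simp
  also have "\<dots> = (matrix_inv M *v x) \<bullet> (M *v (matrix_inv M *v y))" using sym by simp
  also have "\<dots> = (matrix_inv M *v x) \<bullet> y" using p(1) by simp
  finally show ?thesis .
qed

lemma inv_pos:
  fixes M :: "real^'k^'k"
  assumes c: "c > 0" and pd: "\<And>x. c * (x \<bullet> x) \<le> x \<bullet> (M *v x)" and w: "w \<noteq> 0"
  shows "w \<bullet> (matrix_inv M *v w) > 0"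
proof -
  note p = pd_inverse[OF c pd]
  define x where "x = matrix_inv M *v w"
  have "x \<noteq> 0" using p(1)[of w] w unfolding x_def by (metis matrix_vector_mult_0_right)
  then have "0 < c * (x \<bullet> x)" using c by simp
  also have "\<dots> \<le> x \<bullet> (M *v x)" by (rule pd)
  also have "\<dots> = w \<bullet> (matrix_inv M *v w)" using p(1)[of w] unfolding x_def by (simp add: inner_commute)
  finally show ?thesis .
qed

lemma CS_form:
  fixes Q :: "real^'k^'k"
  assumes sym: "\<And>x y. x \<bullet> (Q *v y) = (Q *v x) \<bullet> y" and psd: "\<And>x. 0 \<le> x \<bullet> (Q *v x)"
  shows "(x \<bullet> (Q *v y))\<^sup>2 \<le> (x \<bullet> (Q *v x)) * (y \<bullet> (Q *v y))"
proof -
  define A where "A = x \<bullet> (Q *v x)"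
  define b where "b = x \<bullet> (Q *v y)"
  define C where "C = y \<bullet> (Q *v y)"
  have yx: "y \<bullet> (Q *v x) = b" unfolding b_def using sym[of y x] by (simp add: inner_commute)
  have quad: "0 \<le> A + 2 * s * b + s * s * C" for s
  proof -
    have "0 \<le> (x + s *\<^sub>R y) \<bullet> (Q *v (x + s *\<^sub>R y))" by (rule psd)
    also have "\<dots> = A + 2 * s * b + s * s * C"
      unfolding A_def C_def b_def using yx[unfolded b_def]
      by (simp add: matrix_vector_right_distrib matrix_vector_mult_scaleR inner_add_left inner_add_right algebra_simps)
    finally show ?thesis .
  qed
  have C0: "C \<ge> 0" unfolding C_def by (rule psd)
  show ?thesis
  proof (cases "C = 0")
    case True
    have "b = 0"
    proof (rule ccontr)
      assume bn: "b \<noteq> 0"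
      have "0 \<le> A + 2 * (-(A + 1) / (2 * b)) * b + 0" using quad[of "-(A + 1) / (2 * b)"] True by simp
      also have "\<dots> = -1" using bn by (simp add: field_simps)
      finally show False by simp
    qed
    then show ?thesis unfolding b_def[symmetric] A_def[symmetric] C_def[symmetric] using True by simp
  next
    case False
    then have Cp: "C > 0" using C0 by simp
    have "0 \<le> A + 2 * (- b / C) * b + (- b / C) * (- b / C) * C" by (rule quad)
    also have "\<dots> = A - b\<^sup>2 / C" using Cp by (simp add: field_simps power2_eq_square)
    finally have "b\<^sup>2 / C \<le> A" by simp
    then have "b\<^sup>2 \<le> A * C" using Cp by (simp add: field_simps)
    then show ?thesis unfolding b_def[symmetric] A_def[symmetric] C_def[symmetric] .
  qed
qed

lemma deriv_ratio:
  fixes V :: "real \<Rightarrow> real^'k"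
  assumes dV: "(V has_vector_derivative V') (at lam)" and s0: "V lam \<noteq> 0"
  shows "((\<lambda>\<mu>. K * ((V \<mu> \<bullet> \<alpha>) / sqrt (V \<mu> \<bullet> V \<mu>))) has_real_derivative
     K * (((V' \<bullet> \<alpha>) * sqrt (V lam \<bullet> V lam) - (V lam \<bullet> \<alpha>) * (inverse (sqrt (V lam \<bullet> V lam)) / 2 * (2 * (V lam \<bullet> V'))))
        / (sqrt (V lam \<bullet> V lam) * sqrt (V lam \<bullet> V lam)))) (at lam)"
proof -
  have da: "((\<lambda>\<mu>. V \<mu> \<bullet> \<alpha>) has_real_derivative V' \<bullet> \<alpha>) (at lam)"
    unfolding has_real_derivative_iff_has_vector_derivative
    by (rule bounded_linear.has_vector_derivative[OF bounded_linear_inner_left dV])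
  have "((\<lambda>\<mu>. V \<mu> \<bullet> V \<mu>) has_derivative (\<lambda>h. V lam \<bullet> (h *\<^sub>R V') + (h *\<^sub>R V') \<bullet> V lam)) (at lam)"
    using has_derivative_inner[OF dV[unfolded has_vector_derivative_def] dV[unfolded has_vector_derivative_def]] .
  moreover have "(\<lambda>h. V lam \<bullet> (h *\<^sub>R V') + (h *\<^sub>R V') \<bullet> V lam) = (*) (2 * (V lam \<bullet> V'))"
    by (rule ext) (simp add: inner_commute algebra_simps)
  ultimately have ds: "((\<lambda>\<mu>. V \<mu> \<bullet> V \<mu>) has_real_derivative 2 * (V lam \<bullet> V')) (at lam)"
    unfolding has_field_derivative_def by simp
  have sp: "V lam \<bullet> V lam > 0" using s0 by simp
  have dq: "((\<lambda>\<mu>. sqrt (V \<mu> \<bullet> V \<mu>)) has_real_derivative inverse (sqrt (V lam \<bullet> V lam)) / 2 * (2 * (V lam \<bullet> V'))) (at lam)"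
    by (rule DERIV_chain2[OF DERIV_real_sqrt[OF sp] ds])
  have "sqrt (V lam \<bullet> V lam) \<noteq> 0" using sp by simp
  from DERIV_cmult[OF DERIV_divide[OF da dq this], of K] show ?thesis .
qed

lemma cancel_aux:
  fixes x y p q s :: real
  assumes "p > 0" "q > 0" "s > 0" "y / (q * s) < x / (p * s)"
  shows "y * p < x * q"
proof -
  have "y / (q * s) * (p * q * s) < x / (p * s) * (p * q * s)"
    using assms by (intro mult_strict_right_mono) auto
  moreover have "y / (q * s) * (p * q * s) = y * p" using assms by (simp add: field_simps)
  moreover have "x / (p * s) * (p * q * s) = x * q" using assms by (simp add: field_simps)
  ultimately show ?thesis by simp
qed

declare transpose_matrix_vector [simp del]

lemma row: "(A *v x) $ i = (A $ i) \<bullet> (x::real^'a)"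
  by (simp add: matrix_vector_mult_def inner_vec_def mult.commute)

lemma matpow_123: "matpow X 3 *v y = X *v (X *v (X *v y))" "matpow X 2 *v y = X *v (X *v y)" "matpow X 1 = X"
  by (simp_all add: matpow_def numeral_eq_Suc matrix_vector_mul_assoc)

theorem mainTheorem9:
  fixes L :: "'z \<Rightarrow> real^'p \<Rightarrow> real"
    and z :: "'n::finite \<Rightarrow> 'z"
    and thS :: "real^'p"
    and thA :: "'z set \<Rightarrow> real^'p"
    and a :: nat
    and P :: "real^'q^'p"
    and lam :: real
    and z' :: 'z
  defines "DA \<equiv> subsets_of_size a (range z)"
    and "J \<equiv> (\<chi> i. grad (L (z i)) thS) :: real^'p^'n"
  defines "FS \<equiv> (1 / real CARD('n)) *\<^sub>R (transpose J ** J)"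
    and "fv \<equiv> (\<lambda>A. logitf L z' (thA A))"
  defines "\<alpha> \<equiv> (\<chi> i. unif_exp {A\<in>DA. z i \<in> A} fv - unif_exp DA fv) :: real^'n"
  defines "g \<equiv> (1 / real CARD('n)) *\<^sub>R (transpose J *v \<alpha>)"
    and "u \<equiv> transpose P *v grad (logitf L z') thS"
    and "Fh \<equiv> transpose P ** FS ** P"
  defines "tau \<equiv> (\<lambda>\<mu> zz. - (grad (logitf L z') thS \<bullet>
              (P *v (matrix_inv (Fh + \<mu> *\<^sub>R mat 1) *v (transpose P *v grad (L zz) thS)))))"
  defines "c \<equiv> (\<lambda>\<mu>. pearson DA fv (\<lambda>A. \<Sum>zz\<in>A. tau \<mu> zz))"
    and "t \<equiv> (\<lambda>k. u \<bullet> (matpow (matrix_inv (Fh + lam *\<^sub>R mat 1)) k *v (Fh *v u)))"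
    and "r \<equiv> - (u \<bullet> (matrix_inv (Fh + lam *\<^sub>R mat 1) *v (transpose P *v g)))"
    and "ov \<equiv> \<alpha> \<bullet> (matrix_inv (J ** P ** transpose P ** transpose J
                 + (real CARD('n) * lam) *\<^sub>R mat 1) *v \<alpha>)"
  assumes n2: "CARD('n) \<ge> 2"
    and inj: "inj z"
    and Lpos: "\<And>zz th. L zz th > 0"
    and Ldiff: "\<And>zz th. (L zz) differentiable (at th)"
    and stat: "(\<Sum>i\<in>UNIV. grad (L (z i)) thS) = 0"
    and a1: "1 \<le> a" and an: "a < CARD('n)"
    and lam: "lam > 0"
    and Fu: "Fh *v u \<noteq> 0"
    and varpos: "unif_var DA fv > 0"
    and alpha0: "\<alpha> \<noteq> 0"
    and cond: "r / sqrt (ov * t 1) > t 2 / sqrt (t 3 * t 1)"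
  shows "\<exists>D. (c has_real_derivative D) (at lam) \<and> D > 0"
proof -
  define nn where "nn = real CARD('n)"
  have nn0: "nn > 0" unfolding nn_def by simp
  define B where "B = J ** P"
  define wf where "wf = grad (logitf L z') thS"
  define M where "M = Fh + lam *\<^sub>R mat 1"
  define R where "R = matrix_inv M"
  define Nt where "Nt = J ** P ** transpose P ** transpose J + (nn * lam) *\<^sub>R (mat 1 :: real^'n^'n)"
  define N where "N = matrix_inv Nt"
  have Bx: "B *v x = J *v (P *v x)" for x unfolding B_def by (simp add: matrix_vector_mul_assoc)
  have BTx: "transpose B *v y = transpose P *v (transpose J *v y)" for y
    unfolding B_def by (metis matrix_transpose_mul matrix_vector_mul_assoc)
  have Fhx: "Fh *v x = (1/nn) *\<^sub>R (transpose B *v (B *v x))" for x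
    unfolding Fh_def FS_def nn_def Bx BTx
    by (simp add: matrix_vector_mul_assoc[symmetric] scaleR_matrix_vector_assoc[symmetric] matrix_vector_mult_scaleR)
  have Fin: "x \<bullet> (Fh *v y) = (1/nn) * ((B *v x) \<bullet> (B *v y))" for x y
    unfolding Fhx by (simp add: adj2)
  have Fsym: "\<And>x y. x \<bullet> (Fh *v y) = (Fh *v x) \<bullet> y"
    using Fin by (metis inner_commute)
  have Fpsd: "\<And>x. 0 \<le> x \<bullet> (Fh *v x)" using Fin nn0 by simp
  have Mx: "M *v x = Fh *v x + lam *\<^sub>R x" for x
    unfolding M_def by (simp add: matrix_vector_mult_add_rdistrib scaleR_matrix_vector_assoc[symmetric])
  have Mpd: "\<And>x. lam * (x \<bullet> x) \<le> x \<bullet> (M *v x)" unfolding M_def by (rule shift_pd[OF Fpsd])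
  have Msym: "\<And>x y. x \<bullet> (M *v y) = (M *v x) \<bullet> y"
  proof -
    fix x y :: "real^'q"
    have "x \<bullet> (Fh *v y) = (Fh *v x) \<bullet> y" by (rule Fsym)
    then show "x \<bullet> (M *v y) = (M *v x) \<bullet> y" unfolding Mx by (simp add: inner_add_left inner_add_right)
  qed
  note pM = pd_inverse[OF lam Mpd, folded R_def]
  have Rsym: "\<And>x y. x \<bullet> (R *v y) = (R *v x) \<bullet> y" unfolding R_def by (rule sym_inv[OF lam Mpd Msym])
  have FM: "Fh *v (M *v x) = M *v (Fh *v x)" for x
    unfolding Mx by (simp add: matrix_vector_right_distrib matrix_vector_mult_scaleR)
  have comm: "R *v (Fh *v x) = Fh *v (R *v x)" for x
    by (metis FM pM(1) pM(2))
  have JPPJ: "J ** P ** transpose P ** transpose J = B ** transpose B"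
    unfolding B_def by (simp add: matrix_transpose_mul matrix_mul_assoc)
  have Ntx: "Nt *v x = B *v (transpose B *v x) + (nn * lam) *\<^sub>R x" for x
    unfolding Nt_def JPPJ by (simp add: matrix_vector_mult_add_rdistrib scaleR_matrix_vector_assoc[symmetric]
        matrix_vector_mul_assoc)
  have nl: "nn * lam > 0" using nn0 lam by simp
  have Npd: "\<And>x. (nn * lam) * (x \<bullet> x) \<le> x \<bullet> (Nt *v x)"
  proof -
    fix x :: "real^'n"
    have "x \<bullet> (B *v (transpose B *v x)) = (transpose B *v x) \<bullet> (transpose B *v x)" by (rule adj)
    then show "(nn * lam) * (x \<bullet> x) \<le> x \<bullet> (Nt *v x)" unfolding Ntx by (simp add: inner_add_right)
  qed
  have Nsym0: "\<And>x y. x \<bullet> (Nt *v y) = (Nt *v x) \<bullet> y"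
  proof -
    fix x y :: "real^'n"
    have "x \<bullet> (B *v (transpose B *v y)) = (transpose B *v x) \<bullet> (transpose B *v y)" by (rule adj)
    moreover have "(B *v (transpose B *v x)) \<bullet> y = (transpose B *v x) \<bullet> (transpose B *v y)" by (rule adj2)
    ultimately show "x \<bullet> (Nt *v y) = (Nt *v x) \<bullet> y" unfolding Ntx
      by (simp add: inner_add_right inner_add_left inner_commute)
  qed
  note pN = pd_inverse[OF nl Npd, folded N_def]
  have Nsym: "\<And>x y. x \<bullet> (N *v y) = (N *v x) \<bullet> y" unfolding N_def by (rule sym_inv[OF nl Npd Nsym0])
  have Npsd: "\<And>x. 0 \<le> x \<bullet> (N *v x)"
  proof -
    fix x show "0 \<le> x \<bullet> (N *v x)"
      using inv_pos[OF nl Npd, of x, folded N_def] by (cases "x = 0") auto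
  qed
  have push: "B *v (R *v y) = nn *\<^sub>R (N *v (B *v y))" for y
  proof -
    have "Nt *v (B *v (R *v y)) = B *v (nn *\<^sub>R (Fh *v (R *v y))) + (nn * lam) *\<^sub>R (B *v (R *v y))"
      unfolding Ntx Fhx using nn0 by (simp add: matrix_vector_mult_scaleR)
    also have "\<dots> = nn *\<^sub>R (B *v (M *v (R *v y)))"
      unfolding Mx by (simp add: matrix_vector_mult_scaleR matrix_vector_right_distrib scaleR_add_right)
    also have "\<dots> = nn *\<^sub>R (B *v y)" using pM(1) by simp
    finally have "N *v (Nt *v (B *v (R *v y))) = N *v (nn *\<^sub>R (B *v y))" by simp
    then show ?thesis using pN(2) by (simp add: matrix_vector_mult_scaleR)
  qed
  define m where "m = R *v u"
  have um: "u = M *v m" unfolding m_def using pM(1) by simp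
  have Bm0: "B *v m \<noteq> 0"
  proof
    assume "B *v m = 0"
    then have "Fh *v m = 0" unfolding Fhx by simp
    then have "Fh *v u = 0" unfolding um FM by simp
    then show False using Fu by simp
  qed
  have t1: "t 1 = u \<bullet> (R *v (Fh *v u))" unfolding t_def R_def[symmetric] M_def[symmetric] matpow_123 by simp
  have t2: "t 2 = u \<bullet> (R *v (R *v (Fh *v u)))" unfolding t_def R_def[symmetric] M_def[symmetric] matpow_123 by simp
  have t3: "t 3 = u \<bullet> (R *v (R *v (R *v (Fh *v u))))" unfolding t_def R_def[symmetric] M_def[symmetric] matpow_123 by simp
  have t2eq: "t 2 = (1/nn) * ((B *v m) \<bullet> (B *v m))"
  proof -
    have "t 2 = m \<bullet> (R *v (Fh *v u))" unfolding t2 m_def by (simp add: Rsym)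
    also have "\<dots> = m \<bullet> (Fh *v m)" unfolding comm m_def ..
    finally show ?thesis using Fin by simp
  qed
  have t3eq: "t 3 = (B *v m) \<bullet> (N *v (B *v m))"
  proof -
    have "t 3 = (R *v m) \<bullet> (R *v (Fh *v u))" unfolding t3 m_def by (simp add: Rsym)
    also have "\<dots> = (R *v m) \<bullet> (Fh *v m)" unfolding comm m_def ..
    also have "\<dots> = (1/nn) * ((B *v (R *v m)) \<bullet> (B *v m))" by (rule Fin)
    also have "\<dots> = (B *v m) \<bullet> (N *v (B *v m))" unfolding push using nn0 by (simp add: inner_commute)
    finally show ?thesis .
  qed
  have t2pos: "t 2 > 0" unfolding t2eq using Bm0 nn0 by simp
  have t3pos: "t 3 > 0" unfolding t3eq N_def by (rule inv_pos[OF nl Npd Bm0])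
  have t1pos: "t 1 > 0"
  proof -
    have "t 1 = u \<bullet> (Fh *v m)" unfolding t1 comm m_def ..
    also have "\<dots> = (Fh *v m) \<bullet> (Fh *v m) + lam * (m \<bullet> (Fh *v m))"
      unfolding um Mx by (simp add: inner_add_left)
    also have "m \<bullet> (Fh *v m) = t 2" using t2eq Fin by simp
    finally have "t 1 \<ge> lam * t 2" by simp
    moreover have "lam * t 2 > 0" using lam t2pos by simp
    ultimately show ?thesis by simp
  qed
  have Ptg: "transpose P *v g = (1/nn) *\<^sub>R (transpose B *v \<alpha>)"
    unfolding g_def BTx nn_def by (simp add: matrix_vector_mult_scaleR)
  have req: "r = - (1/nn) * ((B *v m) \<bullet> \<alpha>)"
  proof -
    have "r = - ((R *v u) \<bullet> (transpose P *v g))" unfolding r_def R_def[symmetric] M_def[symmetric] by (simp add: Rsym)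
    also have "\<dots> = - (1/nn) * ((B *v m) \<bullet> \<alpha>)" unfolding Ptg m_def by (simp add: adj2)
    finally show ?thesis .
  qed
  have oveq: "ov = \<alpha> \<bullet> (N *v \<alpha>)" unfolding ov_def N_def Nt_def nn_def ..
  have ovpos: "ov > 0" unfolding oveq N_def by (rule inv_pos[OF nl Npd alpha0])
  define X where "X = (B *v m) \<bullet> (N *v \<alpha>)"
  have CS: "X\<^sup>2 \<le> t 3 * ov" unfolding X_def t3eq oveq by (rule CS_form[OF Nsym Npsd])
  have key0: "r * sqrt (t 3) > t 2 * sqrt ov"
  proof -
    have hc: "t 2 / (sqrt (t 3) * sqrt (t 1)) < r / (sqrt ov * sqrt (t 1))"
      using cond by (simp add: real_sqrt_mult)
    have "t 2 * sqrt ov < r * sqrt (t 3)"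
      by (rule cancel_aux[OF _ _ _ hc]) (use t1pos t3pos ovpos in auto)
    then show ?thesis by simp
  qed
  have key: "X * t 2 + r * t 3 > 0"
  proof -
    have "\<bar>X\<bar> \<le> sqrt (t 3 * ov)" using real_sqrt_le_mono[OF CS] by simp
    then have "X \<ge> - (sqrt (t 3) * sqrt ov)" by (simp add: real_sqrt_mult)
    then have "X * t 2 \<ge> - (sqrt (t 3) * sqrt ov) * t 2"
      using t2pos by (intro mult_right_mono) auto
    moreover have "r * t 3 = sqrt (t 3) * (r * sqrt (t 3))"
    proof -
      have s3: "sqrt (t 3) * sqrt (t 3) = t 3" using t3pos by simp
      have "sqrt (t 3) * (r * sqrt (t 3)) = r * (sqrt (t 3) * sqrt (t 3))" by (simp only: mult_ac)
      then show ?thesis using s3 by simp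
    qed
    moreover have "sqrt (t 3) * (r * sqrt (t 3)) > sqrt (t 3) * (t 2 * sqrt ov)"
      using key0 t3pos by simp
    moreover have "- (sqrt (t 3) * sqrt ov) * t 2 = - (sqrt (t 3) * (t 2 * sqrt ov))" by (simp add: algebra_simps)
    ultimately show ?thesis by linarith
  qed
  define v where "v = (\<lambda>\<mu>. (\<chi> i. tau \<mu> (z i)) :: real^'n)"
  have sum0: "(\<Sum>i\<in>UNIV. tau \<mu> (z i)) = 0" for \<mu>
  proof -
    have "(\<Sum>i\<in>UNIV. tau \<mu> (z i)) = - (grad (logitf L z') thS \<bullet> (P *v (matrix_inv (Fh + \<mu> *\<^sub>R mat 1) *v
       (transpose P *v (\<Sum>i\<in>UNIV. grad (L (z i)) thS)))))"
      unfolding tau_def by (simp add: vec.sum inner_sum_right sum_negf)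
    then show ?thesis using stat by simp
  qed
  define pp where "pp = real ((CARD('n) - 1) choose (a - 1)) / real (CARD('n) choose a)"
  define qq where "qq = (if 2 \<le> a then real ((CARD('n) - 2) choose (a - 2)) else 0) / real (CARD('n) choose a)"
  define Vf where "Vf = unif_var DA fv"
  define K where "K = pp / sqrt (Vf * (pp - qq))"
  have mom: "unif_cov DA fv (\<lambda>A. \<Sum>zz\<in>A. tau \<mu> zz) =
           pp * (\<Sum>i\<in>UNIV. tau \<mu> (z i) * (unif_exp {A\<in>DA. z i \<in> A} fv - unif_exp DA fv))"
    "unif_var DA (\<lambda>A. \<Sum>zz\<in>A. tau \<mu> zz) = (pp - qq) * (\<Sum>i\<in>UNIV. (tau \<mu> (z i))\<^sup>2)"
    "qq < pp" "0 \<le> qq" for \<mu>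
    using moments(1)[where w="tau \<mu>" and F=fv, OF inj a1 an sum0] moments(2)[where w="tau \<mu>", OF inj a1 an sum0]
      moments(3)[where w="tau \<mu>", OF inj a1 an sum0] moments(4)[where w="tau \<mu>", OF inj a1 an sum0]
    unfolding DA_def pp_def qq_def by auto
  have Kpos: "K > 0" unfolding K_def Vf_def using mom(3,4) varpos by simp
  have cexp: "c \<mu> = K * ((v \<mu> \<bullet> \<alpha>) / sqrt (v \<mu> \<bullet> v \<mu>))" for \<mu>
  proof -
    have a1: "unif_cov DA fv (\<lambda>A. \<Sum>zz\<in>A. tau \<mu> zz) = pp * (v \<mu> \<bullet> \<alpha>)"
      unfolding mom(1) v_def \<alpha>_def inner_vec_def by simp
    have a2: "unif_var DA (\<lambda>A. \<Sum>zz\<in>A. tau \<mu> zz) = (pp - qq) * (v \<mu> \<bullet> v \<mu>)"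
      unfolding mom(2) v_def inner_vec_def by (simp add: power2_eq_square)
    have "c \<mu> = pp * (v \<mu> \<bullet> \<alpha>) / sqrt (Vf * ((pp - qq) * (v \<mu> \<bullet> v \<mu>)))"
      unfolding c_def pearson_def a1 a2 Vf_def ..
    also have "\<dots> = K * ((v \<mu> \<bullet> \<alpha>) / sqrt (v \<mu> \<bullet> v \<mu>))"
      unfolding K_def by (simp add: real_sqrt_mult mult.assoc[symmetric])
    finally show ?thesis .
  qed
  define Vt where "Vt = (\<lambda>\<mu>. - (B *v (matrix_inv (Fh + \<mu> *\<^sub>R mat 1) *v u)))"
  have vV: "v \<mu> = Vt \<mu>" if mu: "\<mu> > 0" for \<mu>
  proof -
    let ?M = "Fh + \<mu> *\<^sub>R mat 1"
    let ?R = "matrix_inv ?M"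
    have pd: "\<And>x. \<mu> * (x \<bullet> x) \<le> x \<bullet> (?M *v x)" by (rule shift_pd[OF Fpsd])
    have sy: "\<And>x y. x \<bullet> (?M *v y) = (?M *v x) \<bullet> y"
    proof -
      fix x y :: "real^'q"
      have "x \<bullet> (Fh *v y) = (Fh *v x) \<bullet> y" by (rule Fsym)
      then show "x \<bullet> (?M *v y) = (?M *v x) \<bullet> y"
        by (simp add: matrix_vector_mult_add_rdistrib scaleR_matrix_vector_assoc[symmetric]
          inner_add_left inner_add_right)
    qed
    note Rs = sym_inv[OF mu pd sy]
    show ?thesis unfolding vec_eq_iff
    proof
      fix i
      have "v \<mu> $ i = - (wf \<bullet> (P *v (?R *v (transpose P *v (J $ i)))))"
        unfolding v_def tau_def wf_def J_def by simp
      also have "\<dots> = - (u \<bullet> (?R *v (transpose P *v (J $ i))))" unfolding adj u_def wf_def ..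
      also have "\<dots> = - ((?R *v u) \<bullet> (transpose P *v (J $ i)))" by (simp add: Rs)
      also have "\<dots> = - ((P *v (?R *v u)) \<bullet> (J $ i))" by (simp add: adj)
      also have "\<dots> = Vt \<mu> $ i" unfolding Vt_def Bx by (simp add: row inner_commute)
      finally show "v \<mu> $ i = Vt \<mu> $ i" .
    qed
  qed
  have dR: "((\<lambda>\<mu>. matrix_inv (Fh + \<mu> *\<^sub>R mat 1) *v u) has_vector_derivative - (R *v m)) (at lam)"
    using resolvent_deriv[OF Fpsd lam, of u] unfolding R_def M_def m_def .
  have dV: "(Vt has_vector_derivative (B *v (R *v m))) (at lam)"
    using bounded_linear.has_vector_derivative[OF bounded_linear_minus[OF matrix_vector_mul_bounded_linear[of B]] dR]
    unfolding Vt_def by (simp add: vec.neg)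
  have Vl: "Vt lam = - (B *v m)" unfolding Vt_def m_def R_def M_def ..
  have Vl0: "Vt lam \<noteq> 0" unfolding Vl using Bm0 by simp
  define sq where "sq = sqrt (Vt lam \<bullet> Vt lam)"
  define num where "num = ((B *v (R *v m)) \<bullet> \<alpha>) * sq - (Vt lam \<bullet> \<alpha>) * (inverse sq / 2 * (2 * (Vt lam \<bullet> (B *v (R *v m)))))"
  define D where "D = K * (num / (sq * sq))"
  have dc0: "((\<lambda>\<mu>. K * ((Vt \<mu> \<bullet> \<alpha>) / sqrt (Vt \<mu> \<bullet> Vt \<mu>))) has_real_derivative D) (at lam)"
    unfolding D_def num_def sq_def by (rule deriv_ratio[OF dV Vl0])
  have dc: "(c has_real_derivative D) (at lam)"
  proof (rule has_field_derivative_transform_within_open[OF dc0, of "{0<..}"])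
    show "open {0::real<..}" by simp
    show "lam \<in> {0<..}" using lam by simp
    fix x :: real assume "x \<in> {0<..}"
    then show "K * ((Vt x \<bullet> \<alpha>) / sqrt (Vt x \<bullet> Vt x)) = c x" using cexp vV by simp
  qed
  have e1: "(B *v (R *v m)) \<bullet> \<alpha> = nn * X" unfolding push X_def by (simp add: Nsym)
  have e2: "Vt lam \<bullet> \<alpha> = nn * r" unfolding Vl req using nn0 by simp
  have e3: "Vt lam \<bullet> Vt lam = nn * t 2" unfolding Vl t2eq using nn0 by simp
  have e4: "Vt lam \<bullet> (B *v (R *v m)) = - nn * t 3" unfolding Vl push t3eq by simp
  have sqpos: "sq > 0" unfolding sq_def e3 using nn0 t2pos by simp
  have sq2: "sq * sq = nn * t 2" unfolding sq_def e3 using nn0 t2pos by simp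
  have "num * sq = nn * nn * (X * t 2 + r * t 3)"
  proof -
    have "num * sq = nn * X * (sq * sq) + nn * r * (nn * t 3)"
      unfolding num_def e1 e2 e4 using sqpos by (simp add: field_simps)
    then show ?thesis unfolding sq2 by (simp add: algebra_simps)
  qed
  then have "num * sq > 0" using key nn0 by simp
  then have "num > 0" using sqpos by (simp add: zero_less_mult_iff)
  then have "D > 0" unfolding D_def using Kpos sqpos by simp
  then show ?thesis using dc by blast
qed

end
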